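(* Let $F$ be a graph and let $(G,\varphi)$ and $(H,\phi)$ be two $k$-token reconstructions of $F$. Then $G\simeq H$ if and only if there exists an automorphism $\psi$ of $F$ such that $\mathcal{R}_\phi=\{\psi(X):X\in\mathcal{R}_\varphi\}$.
   Context: $F_k(G)$ is the graph on the $k$-subsets of $V(G)$ with $A,B$ adjacent iff $A\triangle B$ is an edge of $G$. A $k$-token reconstruction of $F$ is a pair $(G',\varphi)$ with $\varphi$ an isomorphism $F\to F_k(G')$. For $u\in V(G)$, $\kappa_G(u,k)=\{A\in V(F_k(G)):u\in A\}$, and for a reconstruction $(G,\varphi)$, $\mathcal{R}_\varphi=\{\varphi^{-1}(\kappa_G(u,k)):u\in V(G)\}$ (similarly $\mathcal{R}_\phi=\{\phi^{-1}(\kappa_H(u,k)):u\in V(H)\}$). *)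

theory Defs
  imports Main
begin

definition graph :: "'a set \<Rightarrow> 'a set set \<Rightarrow> bool" where
  "graph V E \<longleftrightarrow> finite V \<and> (\<forall>e\<in>E. e \<subseteq> V \<and> card e = 2)"

definition graph_iso ::
  "'a set \<Rightarrow> 'a set set \<Rightarrow> 'b set \<Rightarrow> 'b set set \<Rightarrow> ('a \<Rightarrow> 'b) \<Rightarrow> bool" where
  "graph_iso V1 E1 V2 E2 f \<longleftrightarrow> bij_betw f V1 V2 \<and>
     (\<forall>x\<in>V1. \<forall>y\<in>V1. {x, y} \<in> E1 \<longleftrightarrow> {f x, f y} \<in> E2)"

definition graph_isomorphic ::
  "'a set \<Rightarrow> 'a set set \<Rightarrow> 'b set \<Rightarrow> 'b set set \<Rightarrow> bool" where
  "graph_isomorphic V1 E1 V2 E2 \<longleftrightarrow> (\<exists>f. graph_iso V1 E1 V2 E2 f)"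

definition token_vertices :: "'a set \<Rightarrow> nat \<Rightarrow> 'a set set" where
  "token_vertices V k = {A. A \<subseteq> V \<and> card A = k}"

definition token_edges :: "'a set \<Rightarrow> 'a set set \<Rightarrow> nat \<Rightarrow> 'a set set set" where
  "token_edges V E k = {{A, B} | A B. A \<in> token_vertices V k \<and> B \<in> token_vertices V k
       \<and> (A - B) \<union> (B - A) \<in> E}"

definition token_reconstruction ::
  "'f set \<Rightarrow> 'f set set \<Rightarrow> nat \<Rightarrow> 'a set \<Rightarrow> 'a set set \<Rightarrow> ('f \<Rightarrow> 'a set) \<Rightarrow> bool" where
  "token_reconstruction VF EF k V E phi \<longleftrightarrow> graph V E \<and>
     graph_iso VF EF (token_vertices V k) (token_edges V E k) phi"

definition kappa :: "'a set \<Rightarrow> nat \<Rightarrow> 'a \<Rightarrow> 'a set set" where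
  "kappa V k u = {A \<in> token_vertices V k. u \<in> A}"

definition recon_sets :: "'f set \<Rightarrow> nat \<Rightarrow> 'a set \<Rightarrow> ('f \<Rightarrow> 'a set) \<Rightarrow> 'f set set" where
  "recon_sets VF k V phi = {{x \<in> VF. phi x \<in> kappa V k u} | u. u \<in> V}"

end

theory Submission
  imports Defs
begin

lemma te_iff:
  assumes "A \<in> token_vertices V k" "B \<in> token_vertices V k"
  shows "{A,B} \<in> token_edges V E k \<longleftrightarrow> (A - B) \<union> (B - A) \<in> E"
proof
  assume "{A,B} \<in> token_edges V E k"
  then have "\<exists>A' B'. {A,B} = {A',B'} \<and> A' \<in> token_vertices V k \<and> B' \<in> token_vertices V k
       \<and> (A' - B') \<union> (B' - A') \<in> E"
    unfolding token_edges_def by (simp only: mem_Collect_eq)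
  then obtain A' B' where h: "{A,B} = {A',B'}" "(A' - B') \<union> (B' - A') \<in> E"
    by (elim exE conjE) (rule that)
  from h(1) have "(A = A' \<and> B = B') \<or> (A = B' \<and> B = A')" by (simp only: doubleton_eq_iff)
  then show "(A - B) \<union> (B - A) \<in> E"
  proof
    assume "A = A' \<and> B = B'" then show ?thesis using h(2) by simp
  next
    assume "A = B' \<and> B = A'" then show ?thesis using h(2) by (simp add: Un_commute)
  qed
next
  assume a: "(A - B) \<union> (B - A) \<in> E"
  show "{A,B} \<in> token_edges V E k" unfolding token_edges_def mem_Collect_eq
    apply (rule exI[of _ A], rule exI[of _ B])
    by (intro conjI refl assms a)
qed

lemma tr_facts:
  assumes "token_reconstruction VF EF k V E phi"
  shows "graph V E" "bij_betw phi VF (token_vertices V k)"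
    "\<And>x. x \<in> VF \<Longrightarrow> phi x \<subseteq> V \<and> card (phi x) = k"
    "\<And>A. A \<subseteq> V \<Longrightarrow> card A = k \<Longrightarrow> \<exists>x\<in>VF. phi x = A"
    "\<And>x y. x \<in> VF \<Longrightarrow> y \<in> VF \<Longrightarrow> {x,y} \<in> EF \<longleftrightarrow> (phi x - phi y) \<union> (phi y - phi x) \<in> E"
proof -
  have g: "graph_iso VF EF (token_vertices V k) (token_edges V E k) phi"
    using assms unfolding token_reconstruction_def by blast
  show "graph V E" using assms unfolding token_reconstruction_def by blast
  show b: "bij_betw phi VF (token_vertices V k)" using g unfolding graph_iso_def by blast
  show "\<And>x. x \<in> VF \<Longrightarrow> phi x \<subseteq> V \<and> card (phi x) = k"
    using b unfolding bij_betw_def token_vertices_def by blast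
  show "\<And>A. A \<subseteq> V \<Longrightarrow> card A = k \<Longrightarrow> \<exists>x\<in>VF. phi x = A"
  proof -
    fix A assume "A \<subseteq> V" "card A = k"
    then have "A \<in> phi ` VF" using b unfolding bij_betw_def token_vertices_def by blast
    then show "\<exists>x\<in>VF. phi x = A" by blast
  qed
  show "\<And>x y. x \<in> VF \<Longrightarrow> y \<in> VF \<Longrightarrow> {x,y} \<in> EF \<longleftrightarrow> (phi x - phi y) \<union> (phi y - phi x) \<in> E"
  proof -
    fix x y assume xy: "x \<in> VF" "y \<in> VF"
    have "phi x \<in> token_vertices V k" "phi y \<in> token_vertices V k"
      using b xy unfolding bij_betw_def by auto
    have "{x,y} \<in> EF \<longleftrightarrow> {phi x, phi y} \<in> token_edges V E k"
      using g xy unfolding graph_iso_def by blast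
    also have "\<dots> \<longleftrightarrow> (phi x - phi y) \<union> (phi y - phi x) \<in> E"
      by (rule te_iff) fact+
    finally show "{x,y} \<in> EF \<longleftrightarrow> (phi x - phi y) \<union> (phi y - phi x) \<in> E" .
  qed
qed

lemma recon_simp:
  assumes "token_reconstruction VF EF k V E phi"
  shows "recon_sets VF k V phi = (\<lambda>u. {x\<in>VF. u \<in> phi x}) ` V"
proof -
  have "\<And>x u. x \<in> VF \<Longrightarrow> phi x \<in> kappa V k u \<longleftrightarrow> u \<in> phi x"
    using tr_facts(3)[OF assms] unfolding kappa_def token_vertices_def by blast
  then have "\<And>u. {x \<in> VF. phi x \<in> kappa V k u} = {x\<in>VF. u \<in> phi x}" by blast
  then show ?thesis unfolding recon_sets_def by auto
qed


lemma img_edge: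
  assumes "graph_iso V1 E1 V2 E2 f" "graph V1 E1" "graph V2 E2" "C \<subseteq> V1"
  shows "C \<in> E1 \<longleftrightarrow> f ` C \<in> E2"
proof -
  have bij: "bij_betw f V1 V2" using assms(1) unfolding graph_iso_def by blast
  have inj: "inj_on f V1" using bij by (rule bij_betw_imp_inj_on)
  have ed: "\<And>x y. x \<in> V1 \<Longrightarrow> y \<in> V1 \<Longrightarrow> {x,y} \<in> E1 \<longleftrightarrow> {f x, f y} \<in> E2"
    using assms(1) unfolding graph_iso_def by blast
  have cc: "card (f ` C) = card C" by (rule card_image[OF inj_on_subset[OF inj assms(4)]])
  show ?thesis
  proof
    assume CE: "C \<in> E1"
    then have "card C = 2" using assms(2) unfolding graph_def by blast
    then obtain a b where Cab: "C = {a,b}" unfolding card_2_iff by blast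
    have ab: "a \<in> V1" "b \<in> V1" using Cab assms(4) by auto
    have "f ` C = {f a, f b}" using Cab by simp
    then show "f ` C \<in> E2" using ed[OF ab] CE Cab by simp
  next
    assume CE: "f ` C \<in> E2"
    then have "card (f ` C) = 2" using assms(3) unfolding graph_def by blast
    then have "card C = 2" using cc by simp
    then obtain a b where Cab: "C = {a,b}" unfolding card_2_iff by blast
    have ab: "a \<in> V1" "b \<in> V1" using Cab assms(4) by auto
    have "f ` C = {f a, f b}" using Cab by simp
    then show "C \<in> E1" using ed[OF ab] CE Cab by simp
  qed
qed

lemma img_id_on:
  assumes "\<And>x. x \<in> a \<Longrightarrow> h x = x"
  shows "h ` a = a"
proof -
  have "h ` a = (\<lambda>x. x) ` a" by (rule image_cong) (simp_all add: assms)
  then show ?thesis by simp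
qed

lemma forward:
  fixes VF :: "'f set" and EF :: "'f set set"
    and VG :: "'g set" and EG :: "'g set set"
    and VH :: "'h set" and EH :: "'h set set"
    and varphi :: "'f \<Rightarrow> 'g set" and phi :: "'f \<Rightarrow> 'h set"
  assumes G: "token_reconstruction VF EF k VG EG varphi"
    and H: "token_reconstruction VF EF k VH EH phi"
    and fi: "graph_iso VG EG VH EH f"
  shows "\<exists>psi. graph_iso VF EF VF EF psi \<and>
       recon_sets VF k VH phi = (\<lambda>X. psi ` X) ` recon_sets VF k VG varphi"
proof -
  have bf: "bij_betw f VG VH" using fi unfolding graph_iso_def by blast
  have inj: "inj_on f VG" using bf by (rule bij_betw_imp_inj_on)
  have fVG: "f ` VG = VH" using bf by (rule bij_betw_imp_surj_on)
  define g where "g = inv_into VG f"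
  have g1: "\<And>a. a \<in> VG \<Longrightarrow> g (f a) = a" unfolding g_def using inj by simp
  have g2: "\<And>b. b \<in> VH \<Longrightarrow> f (g b) = b" unfolding g_def using fVG by (simp add: f_inv_into_f)
  have g3: "\<And>b. b \<in> VH \<Longrightarrow> g b \<in> VG" unfolding g_def using fVG by (metis inv_into_into)
  have bimg: "bij_betw (image f) (token_vertices VG k) (token_vertices VH k)"
  proof (rule bij_betw_byWitness[where f'="image g"])
    show "\<forall>a\<in>token_vertices VG k. g ` f ` a = a"
    proof
      fix a assume "a \<in> token_vertices VG k"
      then have "a \<subseteq> VG" unfolding token_vertices_def by blast
      then have "\<And>x. x \<in> a \<Longrightarrow> (g \<circ> f) x = x" using g1 by auto
      then show "g ` f ` a = a" unfolding image_comp by (rule img_id_on)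
    qed
    show "\<forall>a\<in>token_vertices VH k. f ` g ` a = a"
    proof
      fix a assume "a \<in> token_vertices VH k"
      then have "a \<subseteq> VH" unfolding token_vertices_def by blast
      then have "\<And>x. x \<in> a \<Longrightarrow> (f \<circ> g) x = x" using g2 by auto
      then show "f ` g ` a = a" unfolding image_comp by (rule img_id_on)
    qed
    show "image f ` token_vertices VG k \<subseteq> token_vertices VH k"
    proof
      fix B assume "B \<in> image f ` token_vertices VG k"
      then obtain A where A: "A \<subseteq> VG" "card A = k" "B = f ` A" unfolding token_vertices_def by blast
      have "card (f ` A) = card A" by (rule card_image[OF inj_on_subset[OF inj A(1)]])
      moreover have "f ` A \<subseteq> VH" using A(1) fVG by blast
      ultimately show "B \<in> token_vertices VH k" using A unfolding token_vertices_def by simp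
    qed
    show "image g ` token_vertices VH k \<subseteq> token_vertices VG k"
    proof
      fix A assume "A \<in> image g ` token_vertices VH k"
      then obtain B where B: "B \<subseteq> VH" "card B = k" "A = g ` B" unfolding token_vertices_def by blast
      have "inj_on g B" unfolding inj_on_def using B(1) g2 by (metis subsetD)
      then have "card (g ` B) = card B" by (rule card_image)
      moreover have "g ` B \<subseteq> VG" using B(1) g3 by blast
      ultimately show "A \<in> token_vertices VG k" using B unfolding token_vertices_def by simp
    qed
  qed
  have bG: "bij_betw varphi VF (token_vertices VG k)" by (rule tr_facts(2)[OF G])
  have bH: "bij_betw phi VF (token_vertices VH k)" by (rule tr_facts(2)[OF H])
  define psi where "psi = inv_into VF phi \<circ> (image f \<circ> varphi)"
  have bpsi: "bij_betw psi VF VF"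
    unfolding psi_def by (rule bij_betw_trans[OF bij_betw_trans[OF bG bimg] bij_betw_inv_into[OF bH]])
  have ppsi: "\<And>x. x \<in> VF \<Longrightarrow> phi (psi x) = f ` varphi x"
  proof -
    fix x assume "x \<in> VF"
    then have "varphi x \<in> token_vertices VG k" by (rule bij_betw_apply[OF bG])
    then have "f ` varphi x \<in> token_vertices VH k" by (rule bij_betw_apply[OF bimg])
    then have "f ` varphi x \<in> phi ` VF" using bij_betw_imp_surj_on[OF bH] by simp
    then show "phi (psi x) = f ` varphi x" unfolding psi_def comp_def by (rule f_inv_into_f)
  qed
  have psiV: "\<And>x. x \<in> VF \<Longrightarrow> psi x \<in> VF" using bij_betw_apply[OF bpsi] by blast
  have gG: "graph VG EG" by (rule tr_facts(1)[OF G])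
  have gH: "graph VH EH" by (rule tr_facts(1)[OF H])
  have iso: "graph_iso VF EF VF EF psi"
    unfolding graph_iso_def
  proof (intro conjI bpsi ballI)
    fix x y assume xy: "x \<in> VF" "y \<in> VF"
    have sx: "varphi x \<subseteq> VG" "varphi y \<subseteq> VG" using tr_facts(3)[OF G] xy by auto
    have sd: "(varphi x - varphi y) \<union> (varphi y - varphi x) \<subseteq> VG" using sx by blast
    have "{x,y} \<in> EF \<longleftrightarrow> (varphi x - varphi y) \<union> (varphi y - varphi x) \<in> EG"
      by (rule tr_facts(5)[OF G xy])
    also have "\<dots> \<longleftrightarrow> f ` ((varphi x - varphi y) \<union> (varphi y - varphi x)) \<in> EH"
      by (rule img_edge[OF fi gG gH sd])
    also have "f ` ((varphi x - varphi y) \<union> (varphi y - varphi x))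
       = (f ` varphi x - f ` varphi y) \<union> (f ` varphi y - f ` varphi x)"
    proof -
      have "varphi x - varphi y \<subseteq> VG" "varphi y - varphi x \<subseteq> VG" using sx by blast+
      then have "f ` (varphi x - varphi y) = f ` varphi x - f ` varphi y"
        "f ` (varphi y - varphi x) = f ` varphi y - f ` varphi x"
        using inj_on_image_set_diff[OF inj _ sx(2), of "varphi x"]
          inj_on_image_set_diff[OF inj _ sx(1), of "varphi y"] by blast+
      then show ?thesis by (simp add: image_Un)
    qed
    also have "\<dots> = (phi (psi x) - phi (psi y)) \<union> (phi (psi y) - phi (psi x))"
      using ppsi xy by simp
    also have "\<dots> \<in> EH \<longleftrightarrow> {psi x, psi y} \<in> EF"
      using tr_facts(5)[OF H psiV psiV] xy by simp
    finally show "{x,y} \<in> EF \<longleftrightarrow> {psi x, psi y} \<in> EF" .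
  qed
  have Xeq: "\<And>u. u \<in> VG \<Longrightarrow> psi ` {x\<in>VF. u \<in> varphi x} = {x\<in>VF. f u \<in> phi x}"
  proof -
    fix u assume u: "u \<in> VG"
    show "psi ` {x\<in>VF. u \<in> varphi x} = {x\<in>VF. f u \<in> phi x}"
    proof
      show "psi ` {x\<in>VF. u \<in> varphi x} \<subseteq> {x\<in>VF. f u \<in> phi x}"
        using ppsi psiV by auto
      show "{x\<in>VF. f u \<in> phi x} \<subseteq> psi ` {x\<in>VF. u \<in> varphi x}"
      proof
        fix y assume y: "y \<in> {x\<in>VF. f u \<in> phi x}"
        then have "y \<in> psi ` VF" using bij_betw_imp_surj_on[OF bpsi] by simp
      then obtain x where x: "x \<in> VF" "y = psi x" by blast
        then have "f u \<in> f ` varphi x" using ppsi y by simp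
        moreover have "varphi x \<subseteq> VG" using tr_facts(3)[OF G] x by blast
        ultimately have "u \<in> varphi x" using inj u by (meson inj_on_image_mem_iff)
        then show "y \<in> psi ` {x\<in>VF. u \<in> varphi x}" using x by blast
      qed
    qed
  qed
  have "recon_sets VF k VH phi = (\<lambda>X. psi ` X) ` recon_sets VF k VG varphi"
  proof -
    have "(\<lambda>u. psi ` {x\<in>VF. u \<in> varphi x}) ` VG = (\<lambda>u. {x\<in>VF. f u \<in> phi x}) ` VG"
      by (rule image_cong[OF refl Xeq])
    also have "\<dots> = (\<lambda>w. {x\<in>VF. w \<in> phi x}) ` (f ` VG)" by (simp add: image_image)
    finally show ?thesis unfolding recon_simp[OF G] recon_simp[OF H] image_image fVG by simp
  qed
  then show ?thesis using iso by blast
qed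


lemma subset_card_exists:
  assumes "finite V" "w \<in> V" "1 \<le> k" "k \<le> card V"
  shows "\<exists>A. A \<subseteq> V \<and> card A = k \<and> w \<in> A"
proof -
  have "card (V - {w}) = card V - 1" using assms(2) by (rule card_Diff_singleton)
  then have "k - 1 \<le> card (V - {w})" using assms(4) by linarith
  then obtain S where S: "S \<subseteq> V - {w}" "card S = k - 1" "finite S"
    by (rule obtain_subset_with_card_n)
  have "w \<notin> S" using S(1) by blast
  then have "card (insert w S) = Suc (card S)" by (rule card_insert_disjoint[OF S(3)])
  then have c: "card (insert w S) = k" using S(2) assms(3) by linarith
  have "insert w S \<subseteq> V" using S(1) assms(2) by blast
  then show ?thesis using c by blast
qed

lemma backward:
  fixes VF :: "'f set" and EF :: "'f set set"
    and VG :: "'g set" and EG :: "'g set set"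
    and VH :: "'h set" and EH :: "'h set set"
    and varphi :: "'f \<Rightarrow> 'g set" and phi :: "'f \<Rightarrow> 'h set"
  assumes G: "token_reconstruction VF EF k VG EG varphi"
    and H: "token_reconstruction VF EF k VH EH phi"
    and k1: "1 \<le> k" and kn: "k < card VG"
    and psi: "graph_iso VF EF VF EF psi"
    and R: "recon_sets VF k VH phi = (\<lambda>X. psi ` X) ` recon_sets VF k VG varphi"
  shows "graph_isomorphic VG EG VH EH"
proof -
  define X where "X u = {x\<in>VF. u \<in> varphi x}" for u
  define Y where "Y w = {x\<in>VF. w \<in> phi x}" for w
  have gG: "graph VG EG" by (rule tr_facts(1)[OF G])
  have gH: "graph VH EH" by (rule tr_facts(1)[OF H])
  have finG: "finite VG" using gG unfolding graph_def by blast
  have finH: "finite VH" using gH unfolding graph_def by blast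
  have bpsi: "bij_betw psi VF VF" using psi unfolding graph_iso_def by blast
  have ipsi: "inj_on psi VF" using bpsi by (rule bij_betw_imp_inj_on)
  have psiV: "\<And>x. x \<in> VF \<Longrightarrow> psi x \<in> VF" using bij_betw_apply[OF bpsi] by blast
  have Req: "Y ` VH = (\<lambda>u. psi ` X u) ` VG"
    using R unfolding recon_simp[OF G] recon_simp[OF H] image_image X_def Y_def .
  have ex: "\<And>u. u \<in> VG \<Longrightarrow> \<exists>w. w \<in> VH \<and> psi ` X u = Y w"
  proof -
    fix u assume u: "u \<in> VG"
    have "psi ` X u \<in> (\<lambda>u. psi ` X u) ` VG" using u by (rule imageI)
    then have "psi ` X u \<in> Y ` VH" unfolding Req .
    then show "\<exists>w. w \<in> VH \<and> psi ` X u = Y w" by blast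
  qed
  define f where "f u = (SOME w. w \<in> VH \<and> psi ` X u = Y w)" for u
  have fVY: "f u \<in> VH \<and> psi ` X u = Y (f u)" if u: "u \<in> VG" for u
    unfolding f_def by (rule someI_ex[OF ex[OF u]])
  have fV: "\<And>u. u \<in> VG \<Longrightarrow> f u \<in> VH" using fVY by blast
  have fY: "\<And>u. u \<in> VG \<Longrightarrow> psi ` X u = Y (f u)" using fVY by blast
  have sep: "\<And>u u'. u \<in> VG \<Longrightarrow> u' \<in> VG \<Longrightarrow> u \<noteq> u' \<Longrightarrow> \<exists>x\<in>VF. u \<in> varphi x \<and> u' \<notin> varphi x"
  proof -
    fix u u' assume u: "u \<in> VG" "u' \<in> VG" "u \<noteq> u'"
    have "k \<le> card (VG - {u'})" using kn u finG by simp
    have "finite (VG - {u'})" using finG by simp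
    moreover have "u \<in> VG - {u'}" using u by simp
    ultimately have "\<exists>A. A \<subseteq> VG - {u'} \<and> card A = k \<and> u \<in> A"
      using k1 \<open>k \<le> card (VG - {u'})\<close> by (rule subset_card_exists)
    then obtain A where A: "A \<subseteq> VG - {u'}" "card A = k" "u \<in> A" by blast
    then obtain x where "x \<in> VF" "varphi x = A" using tr_facts(4)[OF G, of A] by blast
    then show "\<exists>x\<in>VF. u \<in> varphi x \<and> u' \<notin> varphi x" using A by blast
  qed
  have finj: "inj_on f VG"
  proof (rule inj_onI, rule ccontr)
    fix u u' assume u: "u \<in> VG" "u' \<in> VG" "f u = f u'" "u \<noteq> u'"
    have "psi ` X u = psi ` X u'" using fY u by simp
    moreover have "X u \<subseteq> VF" "X u' \<subseteq> VF" unfolding X_def by blast+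
    ultimately have "X u = X u'" using inj_on_image_eq_iff[OF ipsi] by blast
    obtain x where x: "x \<in> VF" "u \<in> varphi x" "u' \<notin> varphi x" using sep u by blast
    have "x \<in> X u" unfolding X_def using x by simp
    then have "x \<in> X u'" using \<open>X u = X u'\<close> by simp
    then have "u' \<in> varphi x" unfolding X_def by simp
    then show False using x(3) by contradiction
  qed
  have key: "\<And>x. x \<in> VF \<Longrightarrow> phi (psi x) = f ` varphi x"
  proof -
    fix x assume x: "x \<in> VF"
    have sub: "f ` varphi x \<subseteq> phi (psi x)"
    proof
      fix w assume "w \<in> f ` varphi x"
      then obtain u where u: "u \<in> varphi x" "w = f u" by blast
      have uG: "u \<in> VG" using tr_facts(3)[OF G] x u by blast
      have "psi x \<in> psi ` X u" using x u unfolding X_def by blast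
      then have "psi x \<in> Y (f u)" using fY uG by simp
      then show "w \<in> phi (psi x)" using u unfolding Y_def by simp
    qed
    have c1: "card (f ` varphi x) = k"
    proof -
      have "varphi x \<subseteq> VG" "card (varphi x) = k" using tr_facts(3)[OF G x] by blast+
      then show ?thesis using card_image[OF inj_on_subset[OF finj]] by simp
    qed
    have c2: "card (phi (psi x)) = k" "phi (psi x) \<subseteq> VH"
      using tr_facts(3)[OF H] psiV x by auto
    have "finite (phi (psi x))" using c2(2) finH finite_subset by blast
    then have "f ` varphi x = phi (psi x)" using card_subset_eq[OF \<open>finite (phi (psi x))\<close> sub] c1 c2(1) by simp
    then show "phi (psi x) = f ` varphi x" by simp
  qed
  have fsurj: "f ` VG = VH"
  proof
    show "f ` VG \<subseteq> VH" using fV by blast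
    show "VH \<subseteq> f ` VG"
    proof
      fix w assume w: "w \<in> VH"
      have "k \<le> card VG" using kn by simp
      then obtain A0 where A0: "A0 \<subseteq> VG" "card A0 = k" "finite A0"
        by (rule obtain_subset_with_card_n)
      then obtain x0 where x0: "x0 \<in> VF" "varphi x0 = A0" using tr_facts(4)[OF G] by blast
      have "phi (psi x0) \<subseteq> VH" "card (phi (psi x0)) = k" using tr_facts(3)[OF H] psiV x0 by auto
      then have "k \<le> card VH" using card_mono[OF finH] by metis
      then obtain B where B: "B \<subseteq> VH" "card B = k" "w \<in> B"
        using subset_card_exists[OF finH w k1] by blast
      then obtain y where y: "y \<in> VF" "phi y = B" using tr_facts(4)[OF H] by blast
      then have "y \<in> psi ` VF" using bij_betw_imp_surj_on[OF bpsi] by simp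
      then obtain x where x: "x \<in> VF" "y = psi x" by blast
      have "B = f ` varphi x" using key x y by simp
      moreover have "varphi x \<subseteq> VG" using tr_facts(3)[OF G] x by blast
      ultimately show "w \<in> f ` VG" using B(3) by blast
    qed
  qed
  have "graph_iso VG EG VH EH f"
    unfolding graph_iso_def
  proof (intro conjI ballI)
    show "bij_betw f VG VH" using finj fsurj unfolding bij_betw_def by blast
    fix u v assume uv: "u \<in> VG" "v \<in> VG"
    show "{u, v} \<in> EG \<longleftrightarrow> {f u, f v} \<in> EH"
    proof (cases "u = v")
      case True
      have "card {u, v} \<noteq> 2" "card {f u, f v} \<noteq> 2" using True by simp_all
      moreover have "\<forall>e\<in>EG. card e = 2" "\<forall>e\<in>EH. card e = 2"
        using gG gH unfolding graph_def by blast+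
      ultimately have "{u, v} \<notin> EG" "{f u, f v} \<notin> EH" by blast+
      then show ?thesis by blast
    next
      case False
      have "k - 1 \<le> card (VG - {u,v})" using kn uv finG False
        by (simp add: card_Diff_subset)
      then obtain S where S: "S \<subseteq> VG - {u,v}" "card S = k - 1" "finite S"
        by (rule obtain_subset_with_card_n)
      have fS: "finite S" using S(1) finG finite_subset by blast
      define A where "A = insert u S"
      define B where "B = insert v S"
      have nuv: "u \<notin> S" "v \<notin> S" using S(1) by blast+
      have "card A = Suc (card S)" unfolding A_def by (rule card_insert_disjoint[OF fS nuv(1)])
      moreover have "A \<subseteq> VG" using S(1) uv unfolding A_def by blast
      ultimately have A: "A \<subseteq> VG" "card A = k" using S(2) k1 by linarith+
      have "card B = Suc (card S)" unfolding B_def by (rule card_insert_disjoint[OF fS nuv(2)])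
      moreover have "B \<subseteq> VG" using S(1) uv unfolding B_def by blast
      ultimately have B: "B \<subseteq> VG" "card B = k" using S(2) k1 by linarith+
      obtain x where x: "x \<in> VF" "varphi x = A" using tr_facts(4)[OF G] A by blast
      obtain y where y: "y \<in> VF" "varphi y = B" using tr_facts(4)[OF G] B by blast
      have dG: "(A - B) \<union> (B - A) = {u, v}" using nuv False unfolding A_def B_def by blast
      have fA: "f ` A = insert (f u) (f ` S)" "f ` B = insert (f v) (f ` S)"
        unfolding A_def B_def by simp_all
      have nf: "f u \<notin> f ` S" "f v \<notin> f ` S" "f u \<noteq> f v"
      proof -
        have SG: "S \<subseteq> VG" using S(1) by blast
        show "f u \<notin> f ` S" using inj_on_image_mem_iff[OF finj uv(1) SG] nuv(1) by blast
        show "f v \<notin> f ` S" using inj_on_image_mem_iff[OF finj uv(2) SG] nuv(2) by blast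
        show "f u \<noteq> f v" using inj_onD[OF finj _ uv] False by blast
      qed
      have dH: "(f ` A - f ` B) \<union> (f ` B - f ` A) = {f u, f v}"
        unfolding fA using nf(1,2,3) by auto
      have "{u, v} \<in> EG \<longleftrightarrow> {x, y} \<in> EF" using tr_facts(5)[OF G x(1) y(1)] x(2) y(2) dG by simp
      also have "\<dots> \<longleftrightarrow> {psi x, psi y} \<in> EF" using psi x y unfolding graph_iso_def by blast
      also have "\<dots> \<longleftrightarrow> (phi (psi x) - phi (psi y)) \<union> (phi (psi y) - phi (psi x)) \<in> EH"
        by (rule tr_facts(5)[OF H psiV[OF x(1)] psiV[OF y(1)]])
      also have "\<dots> \<longleftrightarrow> {f u, f v} \<in> EH" using key[OF x(1)] key[OF y(1)] x(2) y(2) dH by simp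
      finally show ?thesis .
    qed
  qed
  then show ?thesis unfolding graph_isomorphic_def by blast
qed

theorem proposition15:
  fixes VF :: "'f set" and EF :: "'f set set"
    and VG :: "'g set" and EG :: "'g set set"
    and VH :: "'h set" and EH :: "'h set set"
    and varphi :: "'f \<Rightarrow> 'g set" and phi :: "'f \<Rightarrow> 'h set"
    and k :: nat
  assumes "graph VF EF"
    and "token_reconstruction VF EF k VG EG varphi"
    and "token_reconstruction VF EF k VH EH phi"
    and "1 \<le> k" and "k < card VG"
  shows "graph_isomorphic VG EG VH EH \<longleftrightarrow>
    (\<exists>psi. graph_iso VF EF VF EF psi \<and>
       recon_sets VF k VH phi = (\<lambda>X. psi ` X) ` recon_sets VF k VG varphi)"
proof
  assume "graph_isomorphic VG EG VH EH"
  then obtain f where f: "graph_iso VG EG VH EH f" unfolding graph_isomorphic_def by (elim exE)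
  show "\<exists>psi. graph_iso VF EF VF EF psi \<and>
       recon_sets VF k VH phi = (\<lambda>X. psi ` X) ` recon_sets VF k VG varphi"
    by (rule forward[OF assms(2,3) f])
next
  assume "\<exists>psi. graph_iso VF EF VF EF psi \<and>
       recon_sets VF k VH phi = (\<lambda>X. psi ` X) ` recon_sets VF k VG varphi"
  then obtain psi where p1: "graph_iso VF EF VF EF psi"
    and p2: "recon_sets VF k VH phi = (\<lambda>X. psi ` X) ` recon_sets VF k VG varphi"
    by (elim exE conjE)
  show "graph_isomorphic VG EG VH EH" by (rule backward[OF assms(2-5) p1 p2])
qed

end
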